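(* In the four-player team game of dominoes described in the context, the following hold for games that end in a tranca: (a) the minimum, over all such games, of the number of tiles on the board at the end of the game is $10$; (b) the minimum, over all such games, of the total number of pips on the tiles of the board at the end of the game is $42$.
   Context: Domino tiles: the set of tiles consists of the 28 unordered pairs $[a,b]=[b,a]$ with $a,b\in\{0,1,\dots,6\}$; the number of points (pips) of $[a,b]$ is $a+b$. Four players, numbered 1 to 4, play; players 1 and 3 form one team and players 2 and 4 the other. The 28 tiles are dealt, 7 to each player (the initial hands). Players take turns in cyclic order $1,2,3,4,1,\dots$. The starting player places any one of their tiles on the table, forming a line of tiles (the board) with two open ends. On each subsequent turn, the player whose turn it is must, if they hold a tile containing a number equal to the number shown at one of the two open ends, place such a tile at that end (with equal numbers adjacent), the other number of the tile becoming the new open end; if they hold no such tile, they pass. A game ends either when a player places their last tile, or in a tranca (blocked game): a position in which no player holds a tile that can be placed. *)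

theory Defs
  imports Main
begin

text \<open>A tile [a,b] is represented in normal form (a,b) with a \<le> b.
  Players are numbered 1..4; teams {1,3} and {2,4} play no role in the statement.\<close>

type_synonym tile = "nat \<times> nat"

definition all_tiles :: "tile set" where
  "all_tiles = {(a, b). a \<le> b \<and> b \<le> 6}"

fun norm_tile :: "nat \<times> nat \<Rightarrow> tile" where
  "norm_tile (x, y) = (min x y, max x y)"

definition players :: "nat set" where
  "players = {1, 2, 3, 4}"

definition next_player :: "nat \<Rightarrow> nat" where
  "next_player p = p mod 4 + 1"

definition valid_deal :: "(nat \<Rightarrow> tile set) \<Rightarrow> bool" where
  "valid_deal h \<longleftrightarrow>
     (\<forall>p\<in>players. h p \<subseteq> all_tiles \<and> card (h p) = 7) \<and>
     (\<forall>p\<in>players. \<forall>q\<in>players. p \<noteq> q \<longrightarrow> h p \<inter> h q = {})"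

text \<open>The board is a list of oriented tiles (x,y), read left to right, with
  equal numbers adjacent; its open ends are the first number of the first tile
  and the second number of the last tile.\<close>
record state =
  hands :: "nat \<Rightarrow> tile set"
  board :: "(nat \<times> nat) list"
  turn :: nat

definition lend :: "state \<Rightarrow> nat" where
  "lend s = fst (hd (board s))"

definition rend :: "state \<Rightarrow> nat" where
  "rend s = snd (last (board s))"

definition matches :: "tile \<Rightarrow> nat \<Rightarrow> bool" where
  "matches t n \<longleftrightarrow> fst t = n \<or> snd t = n"

definition can_play :: "state \<Rightarrow> nat \<Rightarrow> bool" where
  "can_play s p \<longleftrightarrow>
     (if board s = [] then hands s p \<noteq> {}
      else (\<exists>t\<in>hands s p. matches t (lend s) \<or> matches t (rend s)))"

definition live :: "state \<Rightarrow> bool" where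
  "live s \<longleftrightarrow> (\<forall>p\<in>players. hands s p \<noteq> {})"

definition remove_tile :: "state \<Rightarrow> tile \<Rightarrow> nat \<Rightarrow> tile set" where
  "remove_tile s t = (hands s)(turn s := hands s (turn s) - {t})"

inductive step :: "state \<Rightarrow> state \<Rightarrow> bool" where
  start: "\<lbrakk> live s; board s = []; norm_tile (x, y) \<in> hands s (turn s) \<rbrakk> \<Longrightarrow>
     step s \<lparr> hands = remove_tile s (norm_tile (x, y)), board = [(x, y)],
              turn = next_player (turn s) \<rparr>"
| left: "\<lbrakk> live s; board s \<noteq> []; norm_tile (x, lend s) \<in> hands s (turn s) \<rbrakk> \<Longrightarrow>
     step s \<lparr> hands = remove_tile s (norm_tile (x, lend s)), board = (x, lend s) # board s,
              turn = next_player (turn s) \<rparr>"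
| right: "\<lbrakk> live s; board s \<noteq> []; norm_tile (rend s, x) \<in> hands s (turn s) \<rbrakk> \<Longrightarrow>
     step s \<lparr> hands = remove_tile s (norm_tile (rend s, x)), board = board s @ [(rend s, x)],
              turn = next_player (turn s) \<rparr>"
| pass: "\<lbrakk> live s; \<not> can_play s (turn s) \<rbrakk> \<Longrightarrow>
     step s (s\<lparr> turn := next_player (turn s) \<rparr>)"

definition initial :: "(nat \<Rightarrow> tile set) \<Rightarrow> nat \<Rightarrow> state" where
  "initial h p = \<lparr> hands = h, board = [], turn = p \<rparr>"

definition tranca :: "state \<Rightarrow> bool" where
  "tranca s \<longleftrightarrow> board s \<noteq> [] \<and> (\<forall>p\<in>players. \<not> can_play s p)"

text \<open>Final positions of games (from any valid deal and any starting player)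
  that end in a tranca (and not by a player placing their last tile).\<close>
definition tranca_end :: "state \<Rightarrow> bool" where
  "tranca_end s \<longleftrightarrow>
     (\<exists>h p. valid_deal h \<and> p \<in> players \<and> step\<^sup>*\<^sup>* (initial h p) s) \<and>
     tranca s \<and> live s"

definition board_pips :: "state \<Rightarrow> nat" where
  "board_pips s = sum_list (map (\<lambda>(x, y). x + y) (board s))"

end

theory Submission
  imports Defs
begin

lemma six: "(b::nat) \<le> 6 \<Longrightarrow> b = 0 \<or> b = 1 \<or> b=2 \<or> b=3 \<or> b=4 \<or> b=5 \<or> b=6" by auto

definition tl28 :: "tile list" where "tl28 = [(0,0),(0,1),(0,2),(0,3),(0,4),(0,5),(0,6),(1,1),(1,2),(1,3),(1,4),(1,5),(1,6),
 (2,2),(2,3),(2,4),(2,5),(2,6),(3,3),(3,4),(3,5),(3,6),(4,4),(4,5),(4,6),(5,5),(5,6),(6,6)]"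

lemma tl28_sub: "set tl28 \<subseteq> all_tiles"
  unfolding tl28_def all_tiles_def by simp

lemma sub_tl28: "all_tiles \<subseteq> set tl28"
proof
  fix t assume "t \<in> all_tiles"
  then obtain a b where t: "t = (a,b)" "a \<le> b" "b \<le> 6" unfolding all_tiles_def by auto
  then have "a \<le> 6" by simp
  from six[OF this] six[OF \<open>b \<le> 6\<close>] \<open>a \<le> b\<close> show "t \<in> set tl28" unfolding t(1)
    by (elim disjE) (simp_all add: tl28_def)
qed

lemma tl28: "set tl28 = all_tiles" using tl28_sub sub_tl28 by blast
lemma dtl28: "distinct tl28" by (simp add: tl28_def)

lemma card_all: "card all_tiles = 28"
proof -
  have "card all_tiles = length tl28" using distinct_card[OF dtl28] by (simp only: tl28)
  then show ?thesis by (simp add: tl28_def)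
qed
lemma fin_all: "finite all_tiles" by (simp flip: tl28)


definition ginv :: "state \<Rightarrow> bool" where
"ginv s \<longleftrightarrow> turn s \<in> players \<and>
 (\<forall>q\<in>players. hands s q \<subseteq> all_tiles) \<and>
 (\<forall>q\<in>players. \<forall>r\<in>players. q \<noteq> r \<longrightarrow> hands s q \<inter> hands s r = {}) \<and>
 distinct (map norm_tile (board s)) \<and>
 set (map norm_tile (board s)) \<subseteq> all_tiles \<and>
 (\<forall>q\<in>players. hands s q \<inter> set (map norm_tile (board s)) = {}) \<and>
 all_tiles \<subseteq> (\<Union>q\<in>players. hands s q) \<union> set (map norm_tile (board s)) \<and>
 successively (\<lambda>u v. snd u = fst v) (board s)"

lemma next_in: "next_player p \<in> players"
  unfolding next_player_def players_def by auto

lemma deal_union: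
  assumes "valid_deal h"
  shows "(\<Union>q\<in>players. h q) = all_tiles"
proof (rule card_subset_eq[OF fin_all])
  show "(\<Union>q\<in>players. h q) \<subseteq> all_tiles" using assms unfolding valid_deal_def by auto
  have fin: "\<forall>q\<in>players. finite (h q)" using assms unfolding valid_deal_def
    by (metis card.infinite zero_neq_numeral)
  have "card (\<Union>q\<in>players. h q) = (\<Sum>q\<in>players. card (h q))"
    by (rule card_UN_disjoint) (use fin assms in \<open>auto simp: valid_deal_def players_def\<close>)
  also have "\<dots> = (\<Sum>q\<in>players. 7)" using assms unfolding valid_deal_def by simp
  also have "\<dots> = 28" by (simp add: players_def)
  finally show "card (\<Union>q\<in>players. h q) = card all_tiles" by (simp add: card_all)
qed

lemma ginv_initial: "valid_deal h \<Longrightarrow> p \<in> players \<Longrightarrow> ginv (initial h p)"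
  using deal_union[of h] unfolding ginv_def initial_def valid_deal_def by auto

lemma place:
  assumes g: "ginv s" and t: "t \<in> hands s (turn s)"
    and bs: "set (map norm_tile B) = insert t (set (map norm_tile (board s)))"
    and d: "t \<notin> set (map norm_tile (board s)) \<Longrightarrow> distinct (map norm_tile B)"
    and c: "successively (\<lambda>u v. snd u = fst v) B"
  shows "ginv \<lparr>hands = (hands s)(turn s := hands s (turn s) - {t}), board = B, turn = next_player (turn s)\<rparr>"
proof -
  let ?H = "(hands s)(turn s := hands s (turn s) - {t})"
  let ?S = "set (map norm_tile (board s))"
  have tp: "turn s \<in> players" using g unfolding ginv_def by blast
  have sub: "\<forall>q\<in>players. hands s q \<subseteq> all_tiles" using g unfolding ginv_def by blast
  have dis: "\<forall>q\<in>players. \<forall>r\<in>players. q \<noteq> r \<longrightarrow> hands s q \<inter> hands s r = {}" using g unfolding ginv_def by blast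
  have bsub: "?S \<subseteq> all_tiles" using g unfolding ginv_def by blast
  have hb: "\<forall>q\<in>players. hands s q \<inter> ?S = {}" using g unfolding ginv_def by blast
  have cov: "all_tiles \<subseteq> (\<Union>q\<in>players. hands s q) \<union> ?S" using g unfolding ginv_def by blast
  have tS: "t \<notin> ?S" using hb tp t by blast
  have tA: "t \<in> all_tiles" using sub tp t by blast
  have tq: "\<forall>q\<in>players. q \<noteq> turn s \<longrightarrow> t \<notin> hands s q" using dis tp t by blast
  have 1: "\<forall>q\<in>players. ?H q \<subseteq> all_tiles" using sub by auto
  have 2: "\<forall>q\<in>players. \<forall>r\<in>players. q \<noteq> r \<longrightarrow> ?H q \<inter> ?H r = {}" using dis by auto
  have 3: "set (map norm_tile B) \<subseteq> all_tiles" using bs bsub tA by simp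
  have 4: "\<forall>q\<in>players. ?H q \<inter> set (map norm_tile B) = {}" using hb tq bs by auto
  have 5: "all_tiles \<subseteq> (\<Union>q\<in>players. ?H q) \<union> set (map norm_tile B)"
  proof
    fix x assume "x \<in> all_tiles"
    then have "x \<in> (\<Union>q\<in>players. hands s q) \<union> ?S" using cov by blast
    then show "x \<in> (\<Union>q\<in>players. ?H q) \<union> set (map norm_tile B)"
      using bs by (cases "x = t") auto
  qed
  show ?thesis unfolding ginv_def using next_in 1 2 3 4 5 d[OF tS] c by simp
qed

lemma ginv_step: "step s s' \<Longrightarrow> ginv s \<Longrightarrow> ginv s'"
proof (induction rule: step.induct)
  case (start s x y)
  then show ?case unfolding remove_tile_def
    by (intro place) auto
next
  case (left s x)
  have c: "successively (\<lambda>u v. snd u = fst v) (board s)" and d: "distinct (map norm_tile (board s))"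
    using left unfolding ginv_def by blast+
  from left show ?case unfolding remove_tile_def
    apply (intro place)
    apply (simp_all add: d)
    using c \<open>board s \<noteq> []\<close> by (cases "board s") (auto simp: lend_def)
next
  case (right s x)
  have c: "successively (\<lambda>u v. snd u = fst v) (board s)" and d: "distinct (map norm_tile (board s))"
    using right unfolding ginv_def by blast+
  from right show ?case unfolding remove_tile_def
    apply (intro place)
    apply (simp_all add: d)
    using c \<open>board s \<noteq> []\<close> by (simp add: successively_append_iff rend_def)
next
  case (pass s)
  then show ?case unfolding ginv_def using next_in by auto
qed

lemma ginv_reach: "step\<^sup>*\<^sup>* s s' \<Longrightarrow> ginv s \<Longrightarrow> ginv s'"
  by (induction rule: rtranclp_induct) (auto intro: ginv_step)

definition halves :: "(nat \<times> nat) list \<Rightarrow> nat list" where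
  "halves b = concat (map (\<lambda>(x,y). [x,y]) b)"

definition mt :: "nat \<Rightarrow> tile \<Rightarrow> nat" where
  "mt n t = (if fst t = n then 1 else 0) + (if snd t = n then 1 else 0)"

lemma parity0:
  "successively (\<lambda>u v. snd u = fst v) (t#ts) \<Longrightarrow>
   even (count_list (halves (t#ts)) n + (if fst t = n then 1 else 0) + (if snd (last (t#ts)) = n then 1 else 0))"
proof (induction ts arbitrary: t)
  case Nil
  then show ?case by (simp add: halves_def split: prod.splits)
next
  case (Cons t' ts)
  then have e: "snd t = fst t'" and IH: "even (count_list (halves (t'#ts)) n + (if fst t' = n then 1 else 0) + (if snd (last (t'#ts)) = n then 1 else 0))"
    by auto
  have h: "halves (t#t'#ts) = fst t # snd t # halves (t'#ts)"
    by (simp add: halves_def split: prod.splits)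
  show ?case using IH e unfolding h by auto
qed

lemma parity:
  "b \<noteq> [] \<Longrightarrow> successively (\<lambda>u v. snd u = fst v) b \<Longrightarrow>
   even (count_list (halves b) n + (if fst (hd b) = n then 1 else 0) + (if snd (last b) = n then 1 else 0))"
  using parity0[of "hd b" "tl b" n] by simp

lemma mt_norm: "mt n (min x y, max x y) = (if x = n then 1 else 0) + (if y = n then 1 else 0)"
  by (auto simp: mt_def min_def max_def)

lemma count_sum_list: "count_list (halves b) n = sum_list (map (mt n \<circ> norm_tile) b)"
  by (induction b) (auto simp: halves_def mt_norm split: prod.splits)

lemma count_eq: "distinct (map norm_tile b) \<Longrightarrow> count_list (halves b) n = (\<Sum>t\<in>set (map norm_tile b). mt n t)"
proof -
  assume d: "distinct (map norm_tile b)"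
  have "sum_list (map (mt n \<circ> norm_tile) b) = sum_list (map (mt n) (map norm_tile b))" by simp
  also have "\<dots> = (\<Sum>t\<in>set (map norm_tile b). mt n t)" by (rule sum_list_distinct_conv_sum_set[OF d])
  finally show ?thesis unfolding count_sum_list .
qed

lemma m_sum: "a \<le> 6 \<Longrightarrow> (\<Sum>t\<in>all_tiles. mt a t) = 8"
  apply (simp only: tl28[symmetric] sum.distinct_set_conv_list[OF dtl28])
  apply (drule six) apply (elim disjE) by (simp_all add: tl28_def mt_def)

lemma len_halves: "length (halves b) = 2 * length b"
  by (induction b) (auto simp: halves_def)

lemma pips_halves: "sum_list (halves b) = sum_list (map (\<lambda>(x, y). x + y) b)"
  by (induction b) (auto simp: halves_def)

lemma sum_g: "a \<le> (6::nat) \<Longrightarrow> (\<Sum>n\<le>6. (if n = a then 8 else 2)) = (20::nat)"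
  apply (drule six) apply (elim disjE) by (simp_all add: numeral_eq_Suc)

lemma sum_g2: "a \<le> (6::nat) \<Longrightarrow> (\<Sum>n\<le>6. n * (if n = a then 8 else 2)) \<ge> (42::nat)"
  apply (drule six) apply (elim disjE) by (simp_all add: numeral_eq_Suc)

lemma lower:
  assumes g: "ginv s" and tr: "tranca s"
  shows "10 \<le> length (board s) \<and> 42 \<le> board_pips s"
proof -
  define b where "b = board s"
  define B where "B = set (map norm_tile b)"
  define a where "a = lend s"
  define cnt where "cnt n = count_list (halves b) n" for n
  have bne: "b \<noteq> []" using tr unfolding tranca_def b_def by simp
  have tp: "turn s \<in> players" and dist: "distinct (map norm_tile b)" and BA: "B \<subseteq> all_tiles"
    and cov: "all_tiles \<subseteq> (\<Union>q\<in>players. hands s q) \<union> B"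
    and ch: "successively (\<lambda>u v. snd u = fst v) b"
    using g unfolding ginv_def b_def B_def by blast+
  have aB: "t \<in> B" if tA: "t \<in> all_tiles" and tm: "matches t a" for t
  proof (rule ccontr)
    assume "t \<notin> B"
    then obtain q where q: "q \<in> players" "t \<in> hands s q" using cov tA by blast
    then have "can_play s q" using tm bne unfolding can_play_def a_def b_def by auto
    then show False using tr q unfolding tranca_def by blast
  qed
  have finB: "finite B" unfolding B_def by simp
  have hdB: "norm_tile (hd b) \<in> B" using bne unfolding B_def by simp
  have a6: "a \<le> 6"
  proof -
    have "norm_tile (hd b) \<in> all_tiles" using hdB BA by blast
    then show ?thesis unfolding a_def lend_def b_def[symmetric]
      by (cases "hd b") (auto simp: all_tiles_def)
  qed
  have cnt_eq: "cnt n = (\<Sum>t\<in>B. mt n t)" for n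
    unfolding cnt_def B_def using count_eq[OF dist] by simp
  have ca: "cnt a = 8"
  proof -
    have "(\<Sum>t\<in>B. mt a t) = (\<Sum>t\<in>all_tiles. mt a t)"
    proof (rule sum.mono_neutral_left[OF fin_all BA])
      show "\<forall>t\<in>all_tiles - B. mt a t = 0" using aB unfolding mt_def matches_def by auto
    qed
    then show ?thesis using cnt_eq m_sum[OF a6] by simp
  qed
  have par: "even (cnt n + (if a = n then 1 else 0) + (if rend s = n then 1 else 0))" for n
    using parity[OF bne ch, of n] unfolding cnt_def a_def lend_def rend_def b_def by simp
  have ra: "rend s = a" using par[of a] ca by (auto split: if_splits)
  have cx: "cnt x \<ge> 2" if "x \<le> 6" "x \<noteq> a" for x
  proof -
    have "norm_tile (a, x) \<in> all_tiles" using that a6 by (auto simp: all_tiles_def)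
    moreover have "matches (norm_tile (a, x)) a" by (auto simp: matches_def min_def max_def)
    ultimately have "norm_tile (a, x) \<in> B" using aB by blast
    moreover have "mt x (norm_tile (a, x)) \<ge> 1" by (auto simp: mt_def min_def max_def)
    ultimately have "cnt x \<ge> 1" unfolding cnt_eq using member_le_sum[OF _ _ finB, of "norm_tile (a,x)" "mt x"]
      by simp
    moreover have "even (cnt x)" using par[of x] ra that by simp
    ultimately show ?thesis by presburger
  qed
  have ge: "cnt n \<ge> (if n = a then 8 else 2)" if "n \<le> 6" for n
    using ca cx that by auto
  have h6: "set (halves b) \<subseteq> {..6}"
  proof
    fix z assume "z \<in> set (halves b)"
    then obtain x y where xy: "(x,y) \<in> set b" "z = x \<or> z = y" unfolding halves_def by auto
    then have "norm_tile (x,y) \<in> all_tiles" using BA unfolding B_def by auto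
    then show "z \<in> {..6}" using xy(2) by (auto simp: all_tiles_def)
  qed
  have L: "length (halves b) = (\<Sum>n\<le>6. cnt n)"
    using sum_list_map_eq_sum_count2[OF h6, of "\<lambda>_. 1::nat"] unfolding cnt_def
    by (simp add: sum_list_triv)
  have P: "sum_list (halves b) = (\<Sum>n\<le>6. n * cnt n)"
    using sum_list_map_eq_sum_count2[OF h6, of "\<lambda>n. n"] unfolding cnt_def
    by (simp add: mult.commute)
  have "(20::nat) \<le> (\<Sum>n\<le>6. cnt n)"
    using sum_g[OF a6] sum_mono[of "{..6}" "\<lambda>n. if n = a then 8 else 2" cnt] ge by simp
  then have l10: "10 \<le> length b" using L len_halves[of b] by simp
  have "(42::nat) \<le> (\<Sum>n\<le>6. n * cnt n)"
    using sum_g2[OF a6] sum_mono[of "{..6}" "\<lambda>n. n * (if n = a then 8 else 2)" "\<lambda>n. n * cnt n"] ge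
    by (simp add: mult_le_mono2) 
  then have "42 \<le> board_pips s" using P pips_halves[of b] unfolding board_pips_def b_def by simp
  then show ?thesis using l10 unfolding b_def by simp
qed

definition h0 :: "nat \<Rightarrow> tile set" where
  "h0 q = (if q = 1 then {(0,0),(0,3),(5,6),(1,1),(1,3),(1,4),(1,5)}
    else if q = 2 then {(0,1),(3,4),(0,6),(1,6),(2,2),(2,3),(2,4)}
    else if q = 3 then {(1,2),(0,4),(2,5),(2,6),(3,3),(3,5),(3,6)}
    else if q = 4 then {(0,2),(0,5),(4,4),(4,5),(4,6),(5,5),(6,6)}
    else {})"

lemma valid_h0: "valid_deal h0"
  unfolding valid_deal_def players_def h0_def all_tiles_def by simp

lemma start_steps: "live s \<Longrightarrow> board s = [] \<Longrightarrow> norm_tile (x,y) \<in> hands s (turn s) \<Longrightarrow>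
  remove_tile s (norm_tile (x,y)) = H \<Longrightarrow> next_player (turn s) = T \<Longrightarrow>
  step\<^sup>*\<^sup>* \<lparr>hands = H, board = [(x,y)], turn = T\<rparr> t \<Longrightarrow> step\<^sup>*\<^sup>* s t"
  by (rule converse_rtranclp_into_rtranclp[OF _ ], rule step.start[of s x y]) auto

lemma right_steps: "live s \<Longrightarrow> board s \<noteq> [] \<Longrightarrow> rend s = r \<Longrightarrow> norm_tile (r,x) \<in> hands s (turn s) \<Longrightarrow>
  remove_tile s (norm_tile (r,x)) = H \<Longrightarrow> board s @ [(r,x)] = B \<Longrightarrow> next_player (turn s) = T \<Longrightarrow>
  step\<^sup>*\<^sup>* \<lparr>hands = H, board = B, turn = T\<rparr> t \<Longrightarrow> step\<^sup>*\<^sup>* s t"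
  by (rule converse_rtranclp_into_rtranclp[OF _ ], rule step.right[of s x]) auto

lemmas gsimps = min_def max_def live_def players_def remove_tile_def rend_def next_player_def initial_def h0_def

lemma example: "\<exists>s. step\<^sup>*\<^sup>* (initial h0 1) s \<and>
   board s = [(0,0),(0,1),(1,2),(2,0),(0,3),(3,4),(4,0),(0,5),(5,6),(6,0)] \<and> tranca s \<and> live s"
  apply (rule exI, rule conjI)
   apply (rule start_steps[where x=0 and y=0])
   apply (simp add: gsimps)
   apply (simp add: gsimps)
   apply (simp add: gsimps)
   apply (simp add: gsimps)
   apply (simp add: gsimps)
   apply (rule right_steps[where x=1])
   apply (simp add: gsimps)
   apply (simp add: gsimps)
   apply (simp add: gsimps)
   apply (simp add: gsimps)
   apply (simp add: gsimps)
   apply (simp add: gsimps)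
   apply (simp add: gsimps)
   apply (rule right_steps[where x=2])
   apply (simp add: gsimps)
   apply (simp add: gsimps)
   apply (simp add: gsimps)
   apply (simp add: gsimps)
   apply (simp add: gsimps)
   apply (simp add: gsimps)
   apply (simp add: gsimps)
   apply (rule right_steps[where x=0])
   apply (simp add: gsimps)
   apply (simp add: gsimps)
   apply (simp add: gsimps)
   apply (simp add: gsimps)
   apply (simp add: gsimps)
   apply (simp add: gsimps)
   apply (simp add: gsimps)
   apply (rule right_steps[where x=3])
   apply (simp add: gsimps)
   apply (simp add: gsimps)
   apply (simp add: gsimps)
   apply (simp add: gsimps)
   apply (simp add: gsimps)
   apply (simp add: gsimps)
   apply (simp add: gsimps)
   apply (rule right_steps[where x=4])
   apply (simp add: gsimps)
   apply (simp add: gsimps)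
   apply (simp add: gsimps)
   apply (simp add: gsimps)
   apply (simp add: gsimps)
   apply (simp add: gsimps)
   apply (simp add: gsimps)
   apply (rule right_steps[where x=0])
   apply (simp add: gsimps)
   apply (simp add: gsimps)
   apply (simp add: gsimps)
   apply (simp add: gsimps)
   apply (simp add: gsimps)
   apply (simp add: gsimps)
   apply (simp add: gsimps)
   apply (rule right_steps[where x=5])
   apply (simp add: gsimps)
   apply (simp add: gsimps)
   apply (simp add: gsimps)
   apply (simp add: gsimps)
   apply (simp add: gsimps)
   apply (simp add: gsimps)
   apply (simp add: gsimps)
   apply (rule right_steps[where x=6])
   apply (simp add: gsimps)
   apply (simp add: gsimps)
   apply (simp add: gsimps)
   apply (simp add: gsimps)
   apply (simp add: gsimps)
   apply (simp add: gsimps)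
   apply (simp add: gsimps)
   apply (rule right_steps[where x=0])
   apply (simp add: gsimps)
   apply (simp add: gsimps)
   apply (simp add: gsimps)
   apply (simp add: gsimps)
   apply (simp add: gsimps)
   apply (simp add: gsimps)
   apply (simp add: gsimps)
   apply (rule rtranclp.rtrancl_refl)
  apply (simp add: gsimps tranca_def can_play_def lend_def matches_def)
  done

theorem mainTheorem3:
  shows "((\<exists>s. tranca_end s \<and> length (board s) = 10) \<and>
          (\<forall>s. tranca_end s \<longrightarrow> 10 \<le> length (board s))) \<and>
         ((\<exists>s. tranca_end s \<and> board_pips s = 42) \<and>
          (\<forall>s. tranca_end s \<longrightarrow> 42 \<le> board_pips s))"
proof -
  obtain s0 where s0: "step\<^sup>*\<^sup>* (initial h0 1) s0"
    "board s0 = [(0,0),(0,1),(1,2),(2,0),(0,3),(3,4),(4,0),(0,5),(5,6),(6,0)]" "tranca s0" "live s0"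
    using example by blast
  have te: "tranca_end s0" unfolding tranca_end_def using s0 valid_h0
    by (auto simp: players_def)
  have l: "length (board s0) = 10" using s0(2) by simp
  have p: "board_pips s0 = 42" using s0(2) by (simp add: board_pips_def)
  have lo: "10 \<le> length (board s) \<and> 42 \<le> board_pips s" if te': "tranca_end s" for s
  proof -
    obtain h p where "valid_deal h" "p \<in> players" "step\<^sup>*\<^sup>* (initial h p) s" "tranca s"
      using te' unfolding tranca_end_def by blast
    then show ?thesis using lower ginv_reach ginv_initial by blast
  qed
  show ?thesis using te l p lo by blast
qed


end
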